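(* There is an absolute constant $k_0$ such that the following holds for all sufficiently large $n$ and $t$ with $n^{0.99}<t<n$. Let $\mathcal S$ be a $t$-intersecting family of partial permutations each of size at most $q$, where $t\le q\le n$, and let $\mathcal W_k$ ($1\le k\le q-t$) be obtained from $\mathcal S$ by peeling (for any choices of the simplifications). Then for every integer $k$ with $k_0<k\le q-t$, $$|\mathcal W_k|\le\left(200\max\left(k,\frac tk\right)\right)^k.$$
   Context: Each permutation $\sigma$ of $[n]$ is identified with the set $\{(i,\sigma(i)):i\in[n]\}\subseteq[n]^2$; a partial permutation is a subset of such a set. A family is $t$-intersecting if any two (not necessarily distinct) members $A,B$ have $|A\cap B|\ge t$. A simplification of a $t$-intersecting family is any family obtained by repeatedly applying, in any order, the following operations until neither applies: (i) delete a member that is contained in another, different member; (ii) replace a member $S$ by a proper subset $X\subsetneq S$ provided the resulting family is still $t$-intersecting. Peeling: $\mathcal T_{q-t}$ is a simplification of $\mathcal S$, and for $k=q-t,q-t-1,\dots,1$, $\mathcal W_k=\{T\in\mathcal T_k:|T|=t+k\}$ and $\mathcal T_{k-1}$ is a simplification of $\mathcal T_k\setminus\mathcal W_k$. *)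

theory Defs
  imports Complex_Main "HOL-Combinatorics.Permutations"
begin

definition perm_graph :: "nat \<Rightarrow> (nat \<Rightarrow> nat) \<Rightarrow> (nat \<times> nat) set" where
  "perm_graph n \<sigma> = {(i, \<sigma> i) | i. i \<in> {1..n}}"

definition partial_perm :: "nat \<Rightarrow> (nat \<times> nat) set \<Rightarrow> bool" where
  "partial_perm n P \<longleftrightarrow> (\<exists>\<sigma>. \<sigma> permutes {1..n} \<and> P \<subseteq> perm_graph n \<sigma>)"

text \<open>t-intersecting family (any two, not necessarily distinct, members).\<close>
definition t_intersecting :: "nat \<Rightarrow> 'a set set \<Rightarrow> bool" where
  "t_intersecting t F \<longleftrightarrow> (\<forall>A\<in>F. \<forall>B\<in>F. t \<le> card (A \<inter> B))"

definition simp_step :: "nat \<Rightarrow> 'a set set \<Rightarrow> 'a set set \<Rightarrow> bool" where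
  "simp_step t F G \<longleftrightarrow>
     (\<exists>A\<in>F. \<exists>B\<in>F. A \<noteq> B \<and> A \<subseteq> B \<and> G = F - {A}) \<or>
     (\<exists>S\<in>F. \<exists>X. X \<subset> S \<and> G = insert X (F - {S}) \<and> t_intersecting t G)"

definition simplification :: "nat \<Rightarrow> 'a set set \<Rightarrow> 'a set set \<Rightarrow> bool" where
  "simplification t F G \<longleftrightarrow> (simp_step t)\<^sup>*\<^sup>* F G \<and> (\<nexists>G'. simp_step t G G')"

definition peeling :: "nat \<Rightarrow> nat \<Rightarrow> 'a set set \<Rightarrow> (nat \<Rightarrow> 'a set set) \<Rightarrow> (nat \<Rightarrow> 'a set set) \<Rightarrow> bool" where
  "peeling t q S T W \<longleftrightarrow>
     simplification t S (T (q - t)) \<and>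
     (\<forall>k. 1 \<le> k \<and> k \<le> q - t \<longrightarrow>
        W k = {A \<in> T k. card A = t + k} \<and> simplification t (T k - W k) (T (k - 1)))"

end

theory Submission
  imports Defs
begin


lemma pow_fact_le_exp: "0 \<le> (x::real) \<Longrightarrow> x^n / fact n \<le> exp x"
proof -
  assume x: "0 \<le> x"
  have "x^n/fact n \<le> (\<Sum>i\<le>n. x^i/fact i)"
    by (rule member_le_sum) (use x in auto)
  also have "\<dots> \<le> exp x"
    using x summable_exp_generic[of x]
    by (auto simp: exp_def divide_inverse ac_simps intro!: sum_le_suminf)
  finally show ?thesis .
qed

lemma term_bound:
  fixes k t j :: nat
  assumes k: "1 \<le> k" and jk: "j \<le> k" and jt: "j \<le> t"
  defines "M \<equiv> max (real k) (real t / real k)"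
  shows "real ((k choose j) * (t choose (t - j)) * ((k + j choose j) * (k+1)^(k-j)))
         \<le> real (k choose j) * (24 * M)^k"
proof -
  have Mk: "real k \<le> M" and Mt: "real t / real k \<le> M" unfolding M_def by auto
  have M0: "0 \<le> M" using Mk by simp
  have kpos: "0 < real k" using k by simp
  have c1: "real (t choose (t - j)) \<le> real t ^ j / fact j"
  proof -
    have "t choose (t - j) = t choose j" using jt binomial_symmetric[of j t] by simp
    moreover have "real (t choose j) * fact j \<le> real t ^ j"
      using binomial_fact_pow[of t j] by (metis of_nat_fact of_nat_le_iff of_nat_mult of_nat_power)
    ultimately show ?thesis by (simp add: field_simps)
  qed
  have c2: "real t ^ j / fact j \<le> M ^ j * 3 ^ k"
  proof -
    have "real t ^ j / fact j = (real t / real k) ^ j * (real k ^ j / fact j)"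
      using kpos by (simp add: field_simps power_divide)
    also have "\<dots> \<le> M ^ j * exp (real k)"
      by (intro mult_mono power_mono Mt pow_fact_le_exp) (auto simp: M0)
    also have "exp (real k) = exp 1 ^ k" by (simp add: exp_of_nat_mult[symmetric])
    also have "\<dots> \<le> 3 ^ k" by (intro power_mono exp_le) auto
    finally show ?thesis using M0 by (simp add: mult_left_mono)
  qed
  have c3: "real ((k+1)^(k-j)) \<le> 2^k * M^(k-j)"
  proof -
    have "real ((k+1)^(k-j)) = (real k + 1)^(k-j)" by (simp add: add.commute)
    also have "\<dots> \<le> (2*M)^(k-j)" using Mk k by (intro power_mono) auto
    also have "\<dots> = 2^(k-j) * M^(k-j)" by (simp add: power_mult_distrib)
    also have "\<dots> \<le> 2^k * M^(k-j)" using M0 by (intro mult_right_mono power_increasing) auto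
    finally show ?thesis .
  qed
  have c4: "real (k + j choose j) \<le> 4^k"
  proof -
    have "k + j choose j \<le> 2^(k+j)" by (rule binomial_le_pow2)
    also have "(2::nat)^(k+j) \<le> 2^(2*k)" using jk by (intro power_increasing) auto
    also have "(2::nat)^(2*k) = 4^k" by (simp add: power_mult)
    finally show ?thesis by (metis of_nat_le_iff of_nat_numeral of_nat_power)
  qed
  have "real ((k choose j) * (t choose (t - j)) * ((k + j choose j) * (k+1)^(k-j)))
      = real (k choose j) * (real (t choose (t - j)) * real (k + j choose j) * real ((k+1)^(k-j)))"
    by simp
  also have "\<dots> \<le> real (k choose j) * ((M ^ j * 3 ^ k) * 4^k * (2^k * M^(k-j)))"
    using c1 c2 c3 c4 M0
    by (intro mult_left_mono mult_mono) auto
  also have "(M ^ j * 3 ^ k) * 4^k * (2^k * M^(k-j)) = (24 * M)^k"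
  proof -
    have e1: "M ^ j * M^(k-j) = M^k" using jk by (simp add: power_add[symmetric])
    have "(24::real)^k = (3*4*2)^k" by simp
    also have "\<dots> = 3^k*4^k*2^k" by (simp only: power_mult_distrib)
    finally have e2: "(3::real)^k*4^k*2^k = 24^k" by simp
    have "(M ^ j * 3 ^ k) * 4^k * (2^k * M^(k-j)) = (M ^ j * M^(k-j)) * ((3::real)^k * 4^k * 2^k)"
      by (simp only: ac_simps)
    also have "\<dots> = M^k * 24^k" by (simp only: e1 e2)
    also have "\<dots> = (24 * M)^k" by (simp add: power_mult_distrib)
    finally show ?thesis .
  qed
  finally show ?thesis .
qed

lemma final_ineq:
  fixes k t :: nat assumes k: "1 \<le> k"
  shows "real (\<Sum>j\<in>{..min k t}. (k choose j) * (t choose (t - j)) * ((k + j choose j) * (k+1)^(k-j)))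
     \<le> (200 * max (real k) (real t / real k))^k"
proof -
  define M where "M = max (real k) (real t / real k)"
  have M0: "0 \<le> M" unfolding M_def by auto
  have "real (\<Sum>j\<in>{..min k t}. (k choose j) * (t choose (t - j)) * ((k + j choose j) * (k+1)^(k-j)))
      = (\<Sum>j\<in>{..min k t}. real ((k choose j) * (t choose (t - j)) * ((k + j choose j) * (k+1)^(k-j))))"
    by (simp only: of_nat_sum)
  also have "\<dots> \<le> (\<Sum>j\<in>{..min k t}. real (k choose j) * (24 * M)^k)"
  proof (rule sum_mono)
    fix j assume "j \<in> {..min k t}"
    then show "real ((k choose j) * (t choose (t - j)) * ((k + j choose j) * (k+1)^(k-j)))
       \<le> real (k choose j) * (24 * M)^k"
      using term_bound[of k j t, folded M_def] k by auto
  qed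
  also have "\<dots> \<le> (\<Sum>j\<in>{..k}. real (k choose j) * (24 * M)^k)"
    using M0 by (intro sum_mono2) auto
  also have "\<dots> = 2^k * (24*M)^k"
    by (simp add: sum_distrib_right[symmetric] of_nat_sum[symmetric] choose_row_sum del: of_nat_sum)
  also have "\<dots> = (2 * (24 * M))^k" by (rule power_mult_distrib[symmetric])
  also have "\<dots> = (48 * M)^k" by simp
  also have "\<dots> \<le> (200 * M)^k" using M0 by (intro power_mono) auto
  finally show ?thesis unfolding M_def .
qed


lemma crit_of_terminal:
  assumes tI: "t_intersecting t F" and trm: "\<nexists>G. simp_step t F G"
    and B: "B \<in> F" and DB: "D \<subset> B"
  shows "\<exists>C\<in>F. card (C \<inter> D) < t"
proof (rule ccontr)
  assume "\<not> ?thesis"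
  hence h: "\<forall>C\<in>F. t \<le> card (C \<inter> D)" by (auto simp: not_less)
  have "B \<inter> D = D" using DB by auto
  hence Dt: "t \<le> card D" using h B by metis
  have "t_intersecting t (insert D (F - {B}))"
    unfolding t_intersecting_def
  proof (intro ballI)
    fix X Y assume X: "X \<in> insert D (F - {B})" and Y: "Y \<in> insert D (F - {B})"
    show "t \<le> card (X \<inter> Y)"
    proof (cases "X = D")
      case True
      then show ?thesis
        using Y h Dt by (cases "Y = D") (auto simp: Int_commute)
    next
      case False
      then have XF: "X \<in> F" using X by auto
      show ?thesis
      proof (cases "Y = D")
        case True then show ?thesis using h XF by auto
      next
        case False then have "Y \<in> F" using Y by auto
        then show ?thesis using XF tI unfolding t_intersecting_def by auto
      qed
    qed
  qed
  hence "simp_step t F (insert D (F - {B}))" unfolding simp_step_def using B DB by blast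
  with trm show False by blast
qed

lemma branch:
  assumes tI: "t_intersecting t F" and fin: "\<forall>C\<in>F. finite C" and WF: "W \<subseteq> F" and fW: "finite W"
    and C: "C \<in> F" and fD: "finite D"
  shows "card {B\<in>W. D \<subseteq> B} \<le> (\<Sum>Y\<in>{Y. Y \<subseteq> C - D \<and> card Y = t - card (C\<inter>D)}. card {B\<in>W. D \<union> Y \<subseteq> B})"
proof -
  let ?I = "{Y. Y \<subseteq> C - D \<and> card Y = t - card (C\<inter>D)}"
  have fC: "finite C" using fin C by auto
  have sub: "{B\<in>W. D \<subseteq> B} \<subseteq> (\<Union>Y\<in>?I. {B\<in>W. D \<union> Y \<subseteq> B})"
  proof
    fix B assume "B \<in> {B\<in>W. D \<subseteq> B}"
    hence BW: "B \<in> W" and DB: "D \<subseteq> B" by auto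
    have "t \<le> card (B \<inter> C)" using tI BW WF C unfolding t_intersecting_def by auto
    moreover have "card (B \<inter> C) \<le> card (C \<inter> D) + card (B \<inter> (C - D))"
    proof -
      have "B \<inter> C \<subseteq> (C \<inter> D) \<union> (B \<inter> (C - D))" by auto
      hence "card (B \<inter> C) \<le> card ((C \<inter> D) \<union> (B \<inter> (C - D)))" using fC by (intro card_mono) auto
      also have "\<dots> \<le> card (C \<inter> D) + card (B \<inter> (C - D))" by (rule card_Un_le)
      finally show ?thesis .
    qed
    ultimately have "t - card (C\<inter>D) \<le> card (B \<inter> (C - D))" by linarith
    then obtain Y where Y: "Y \<subseteq> B \<inter> (C - D)" "card Y = t - card (C\<inter>D)"
      by (meson obtain_subset_with_card_n)
    hence "Y \<in> ?I" "D \<union> Y \<subseteq> B" using DB by auto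
    thus "B \<in> (\<Union>Y\<in>?I. {B\<in>W. D \<union> Y \<subseteq> B})" using BW by blast
  qed
  have fI: "finite ?I" by (rule finite_subset[of _ "Pow (C - D)"]) (use fC in auto)
  have "card {B\<in>W. D \<subseteq> B} \<le> card (\<Union>Y\<in>?I. {B\<in>W. D \<union> Y \<subseteq> B})"
    by (rule card_mono[OF finite_subset[OF _ fW] sub]) auto
  also have "\<dots> \<le> (\<Sum>Y\<in>?I. card {B\<in>W. D \<union> Y \<subseteq> B})" by (rule card_UN_le[OF fI])
  finally show ?thesis .
qed

lemma choose_le_pow: "(k + m choose m) \<le> (k+1::nat)^m"
proof (induction m)
  case 0 show ?case by simp
next
  case (Suc m)
  have e: "Suc (k+m) * (k + m choose m) = (Suc (k + m) choose Suc m) * Suc m"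
    by (rule Suc_times_binomial_eq)
  have "(k + Suc m choose Suc m) * Suc m = Suc (k+m) * (k + m choose m)" using e by simp
  also have "\<dots> \<le> Suc (k+m) * (k+1)^m" using Suc.IH by (intro mult_left_mono) auto
  also have "\<dots> \<le> ((k+1) * Suc m) * (k+1)^m" by (intro mult_right_mono) auto
  also have "\<dots> = (k+1)^(Suc m) * Suc m" by (simp add: algebra_simps)
  finally have "(k + Suc m choose Suc m) * Suc m \<le> (k+1)^(Suc m) * Suc m" .
  thus ?case by (simp only: mult_le_cancel2)
qed

lemma G1:
  assumes tI: "t_intersecting t F" and fin: "\<forall>C\<in>F. finite C \<and> card C \<le> t + k"
    and crit: "\<forall>B\<in>F. \<forall>D. D \<subset> B \<longrightarrow> (\<exists>C\<in>F. card (C \<inter> D) < t)"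
    and Wdef: "W = {B\<in>F. card B = t + k}" and fW: "finite W"
  shows "finite D \<Longrightarrow> card {B\<in>W. D \<subseteq> B} \<le> (k+1)^(t + k - card D)"
proof (induction D rule: measure_induct_rule[where f="\<lambda>D. t + k - card D"])
  case (less D)
  have fD: "finite D" by (rule less.prems)
  show ?case
  proof (cases "{B\<in>W. D \<subseteq> B} = {}")
    case True then show ?thesis by (metis card.empty zero_le)
  next
    case False
    then obtain B0 where B0: "B0 \<in> W" "D \<subseteq> B0" by auto
    have B0F: "B0 \<in> F" and cB0: "card B0 = t + k" using B0 Wdef by auto
    have fB0: "finite B0" using fin B0F by auto
    show ?thesis
    proof (cases "t + k \<le> card D")
      case True
      have "{B\<in>W. D \<subseteq> B} \<subseteq> {D}"
      proof
        fix B assume "B \<in> {B\<in>W. D \<subseteq> B}"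
        hence "B \<in> F" "card B = t+k" "D \<subseteq> B" using Wdef by auto
        hence "B = D" using fin True by (metis card_seteq)
        thus "B \<in> {D}" by simp
      qed
      hence "card {B\<in>W. D \<subseteq> B} \<le> card {D}" by (intro card_mono) auto
      moreover have "1 \<le> (k+1)^(t + k - card D)" by simp
      moreover have "card {D} = 1" by simp
      ultimately show ?thesis by linarith
    next
      case False
      hence "D \<noteq> B0" using cB0 by auto
      hence "D \<subset> B0" using B0 by auto
      then obtain C where C: "C \<in> F" "card (C \<inter> D) < t" using crit B0F by blast
      define m where "m = t - card (C \<inter> D)"
      have m1: "1 \<le> m" using C m_def by simp
      have fC: "finite C" and cC: "card C \<le> t + k" using fin C by auto
      have "t \<le> card (B0 \<inter> C)" using tI B0F C unfolding t_intersecting_def by auto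
      also have "card (B0 \<inter> C) \<le> card (C \<inter> D) + card (B0 - D)"
      proof -
        have "B0 \<inter> C \<subseteq> (C \<inter> D) \<union> (B0 - D)" by auto
        hence "card (B0 \<inter> C) \<le> card ((C \<inter> D) \<union> (B0 - D))" using fC fB0 by (intro card_mono) auto
        also have "\<dots> \<le> card (C \<inter> D) + card (B0 - D)" by (rule card_Un_le)
        finally show ?thesis .
      qed
      finally have "m \<le> card (B0 - D)" unfolding m_def by linarith
      also have "card (B0 - D) = t + k - card D" using card_Diff_subset[OF fD B0(2)] cB0 by simp
      finally have mr: "m \<le> t + k - card D" .
      let ?I = "{Y. Y \<subseteq> C - D \<and> card Y = m}"
      have "card {B\<in>W. D \<subseteq> B} \<le> (\<Sum>Y\<in>?I. card {B\<in>W. D \<union> Y \<subseteq> B})"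
      proof -
        have h1: "\<forall>C\<in>F. finite C" using fin by auto
        have h2: "W \<subseteq> F" using Wdef by auto
        show ?thesis using branch[OF tI h1 h2 fW C(1) fD] unfolding m_def .
      qed
      also have "\<dots> \<le> (\<Sum>Y\<in>?I. (k+1)^(t + k - card D - m))"
      proof (rule sum_mono)
        fix Y assume Y: "Y \<in> ?I"
        have fY: "finite Y" using Y fC finite_subset by blast
        have cDY: "card (D \<union> Y) = card D + m" using Y fD fY by (subst card_Un_disjoint) auto
        have "t + k - card (D \<union> Y) < t + k - card D" using cDY m1 False by linarith
        hence "card {B\<in>W. D \<union> Y \<subseteq> B} \<le> (k+1)^(t + k - card (D \<union> Y))"
          using less.IH fD fY by blast
        also have "t + k - card (D \<union> Y) = t + k - card D - m" using cDY by simp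
        finally show "card {B\<in>W. D \<union> Y \<subseteq> B} \<le> (k+1)^(t + k - card D - m)" .
      qed
      also have "\<dots> = (card (C - D) choose m) * (k+1)^(t + k - card D - m)"
        using n_subsets[of "C - D" m] fC by simp
      also have "\<dots> \<le> (k + m choose m) * (k+1)^(t + k - card D - m)"
      proof -
        have "card (C - D) = card C - card (C \<inter> D)" using fC by (intro card_Diff_subset_Int) auto
        hence "card (C - D) \<le> k + m" using cC m_def C by linarith
        then show ?thesis by (intro mult_right_mono binomial_right_mono) auto
      qed
      also have "\<dots> \<le> (k+1)^m * (k+1)^(t + k - card D - m)"
        by (intro mult_right_mono choose_le_pow) auto
      also have "\<dots> = (k+1)^(m + (t + k - card D - m))" by (simp only: power_add)
      also have "m + (t + k - card D - m) = t + k - card D" using mr by simp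
      finally show ?thesis by simp
    qed
  qed
qed

lemma family_bound:
  assumes tI: "t_intersecting t F" and fin: "\<forall>C\<in>F. finite C \<and> card C \<le> t + k"
    and crit: "\<forall>B\<in>F. \<forall>D. D \<subset> B \<longrightarrow> (\<exists>C\<in>F. card (C \<inter> D) < t)"
    and Wdef: "W = {B\<in>F. card B = t + k}" and k1: "1 \<le> k"
  shows "card W \<le> (\<Sum>j\<in>{..min k t}. (k choose j) * (t choose (t - j)) * ((k + j choose j) * (k+1)^(k-j)))"
proof (cases "W = {} \<or> infinite W")
  case True then show ?thesis by auto
next
  case False
  hence fW: "finite W" and "W \<noteq> {}" by auto
  then obtain A where AW: "A \<in> W" by auto
  have AF: "A \<in> F" and cA: "card A = t + k" using Wdef AW by auto
  have fA: "finite A" using fin AF by auto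
  have "A \<noteq> {}" using cA k1 by auto
  then obtain x where x: "x \<in> A" by auto
  have "A - {x} \<subset> A" using x by auto
  then obtain C0 where C0: "C0 \<in> F" "card (C0 \<inter> (A - {x})) < t" using crit AF by blast
  have fC0: "finite C0" and cC0: "card C0 \<le> t+k" using fin C0 by auto
  have "t \<le> card (A \<inter> C0)" using tI AF C0 unfolding t_intersecting_def by auto
  moreover have "card (A \<inter> C0) \<le> card (C0 \<inter> (A - {x})) + 1"
  proof -
    have "A \<inter> C0 \<subseteq> insert x (C0 \<inter> (A - {x}))" by auto
    hence "card (A \<inter> C0) \<le> card (insert x (C0 \<inter> (A - {x})))" using fA by (intro card_mono) auto
    also have "\<dots> \<le> card (C0 \<inter> (A - {x})) + 1" using fA by (auto simp: card_insert_if)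
    finally show ?thesis .
  qed
  ultimately have cAC0: "card (A \<inter> C0) = t" using C0 by linarith
  have cAmC0: "card (A - C0) = k" using card_Diff_subset_Int[of A C0] fA cA cAC0 by simp
  have h1: "\<forall>C\<in>F. finite C" using fin by auto
  have h2: "W \<subseteq> F" using Wdef by auto
  define X where "X j = (k + j choose j) * (k+1)^(k-j)" for j
  let ?J = "{..min k t}"
  let ?T2 = "\<lambda>j. {T2. T2 \<subseteq> A - C0 \<and> card T2 = j}"
  let ?T1 = "\<lambda>j. {T1. T1 \<subseteq> A \<inter> C0 \<and> card T1 = t - j}"
  let ?S = "\<lambda>T1 T2. {B\<in>W. T1 \<union> T2 \<subseteq> B}"
  have cover: "W \<subseteq> (\<Union>j\<in>?J. \<Union>T2\<in>?T2 j. \<Union>T1\<in>?T1 j. ?S T1 T2)"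
  proof
    fix B assume BW: "B \<in> W"
    have "t \<le> card (A \<inter> B)" using tI AF BW Wdef unfolding t_intersecting_def by auto
    then obtain T where T: "T \<subseteq> A \<inter> B" "card T = t" "finite T" by (meson obtain_subset_with_card_n)
    define j where "j = card (T - C0)"
    have "T - C0 \<subseteq> A - C0" using T by auto
    hence jk: "j \<le> k" unfolding j_def using cAmC0 fA by (metis card_mono finite_Diff)
    have jt: "j \<le> t" unfolding j_def using T by (metis card_mono Diff_subset)
    have "card (T - C0) = card T - card (T \<inter> C0)" using T by (intro card_Diff_subset_Int) auto
    moreover have "card (T \<inter> C0) \<le> card T" using T by (intro card_mono) auto
    ultimately have cT1: "card (T \<inter> C0) = t - j" using T j_def by linarith
    have "j \<in> ?J" using jk jt by auto
    moreover have "T - C0 \<in> ?T2 j" using T j_def by auto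
    moreover have "T \<inter> C0 \<in> ?T1 j" using T cT1 by auto
    moreover have "B \<in> ?S (T \<inter> C0) (T - C0)" using BW T by auto
    ultimately show "B \<in> (\<Union>j\<in>?J. \<Union>T2\<in>?T2 j. \<Union>T1\<in>?T1 j. ?S T1 T2)" by blast
  qed
  have fT2: "finite (?T2 j)" for j by (rule finite_subset[of _ "Pow (A - C0)"]) (use fA in auto)
  have fT1: "finite (?T1 j)" for j by (rule finite_subset[of _ "Pow (A \<inter> C0)"]) (use fA in auto)
  have Sb: "card (?S T1 T2) \<le> X j" if j: "j \<in> ?J" and T2: "T2 \<in> ?T2 j" and T1: "T1 \<in> ?T1 j" for j T1 T2
  proof -
    define T where "T = T1 \<union> T2"
    have jk: "j \<le> k" and jt: "j \<le> t" using j by auto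
    have fT1': "finite T1" using T1 fA finite_subset by blast
    have fT2': "finite T2" using T2 fA finite_subset by blast
    have fT: "finite T" unfolding T_def using fT1' fT2' by auto
    have disj: "T1 \<inter> T2 = {}" using T1 T2 by auto
    have cT: "card T = t" unfolding T_def using card_Un_disjoint[OF fT1' fT2' disj] T1 T2 jt by auto
    have CT: "C0 \<inter> T = T1" unfolding T_def using T1 T2 by auto
    have mj: "t - card (C0 \<inter> T) = j" using CT T1 jt by auto
    let ?I = "{Y. Y \<subseteq> C0 - T \<and> card Y = j}"
    have "card (?S T1 T2) = card {B\<in>W. T \<subseteq> B}" unfolding T_def by simp
    also have "\<dots> \<le> (\<Sum>Y\<in>?I. card {B\<in>W. T \<union> Y \<subseteq> B})"
      using branch[OF tI h1 h2 fW C0(1) fT] unfolding mj .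
    also have "\<dots> \<le> (\<Sum>Y\<in>?I. (k+1)^(k - j))"
    proof (rule sum_mono)
      fix Y assume Y: "Y \<in> ?I"
      have fY: "finite Y" using Y fC0 finite_subset by blast
      have cTY: "card (T \<union> Y) = t + j" using Y fT fY cT by (subst card_Un_disjoint) auto
      have "card {B\<in>W. T \<union> Y \<subseteq> B} \<le> (k+1)^(t + k - card (T \<union> Y))"
        using G1[OF tI fin crit Wdef fW] fT fY by blast
      also have "t + k - card (T \<union> Y) = k - j" using cTY by simp
      finally show "card {B\<in>W. T \<union> Y \<subseteq> B} \<le> (k+1)^(k - j)" .
    qed
    also have "\<dots> = (card (C0 - T) choose j) * (k+1)^(k - j)"
      using n_subsets[of "C0 - T" j] fC0 by simp
    also have "\<dots> \<le> (k + j choose j) * (k+1)^(k - j)"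
    proof -
      have "card (C0 - T) = card C0 - card (C0 \<inter> T)" using fC0 by (intro card_Diff_subset_Int) auto
      hence "card (C0 - T) \<le> k + j" using cC0 CT T1 by auto
      then show ?thesis by (intro mult_right_mono binomial_right_mono) auto
    qed
    finally show ?thesis unfolding X_def .
  qed
  have fU: "finite (\<Union>j\<in>?J. \<Union>T2\<in>?T2 j. \<Union>T1\<in>?T1 j. ?S T1 T2)"
    by (rule finite_subset[OF _ fW]) auto
  have "card W \<le> card (\<Union>j\<in>?J. \<Union>T2\<in>?T2 j. \<Union>T1\<in>?T1 j. ?S T1 T2)"
    by (rule card_mono[OF fU cover])
  also have "\<dots> \<le> (\<Sum>j\<in>?J. card (\<Union>T2\<in>?T2 j. \<Union>T1\<in>?T1 j. ?S T1 T2))"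
    by (rule card_UN_le) simp
  also have "\<dots> \<le> (\<Sum>j\<in>?J. \<Sum>T2\<in>?T2 j. card (\<Union>T1\<in>?T1 j. ?S T1 T2))"
    by (intro sum_mono card_UN_le fT2)
  also have "\<dots> \<le> (\<Sum>j\<in>?J. \<Sum>T2\<in>?T2 j. \<Sum>T1\<in>?T1 j. card (?S T1 T2))"
    by (intro sum_mono card_UN_le fT1)
  also have "\<dots> \<le> (\<Sum>j\<in>?J. \<Sum>T2\<in>?T2 j. \<Sum>T1\<in>?T1 j. X j)"
    by (intro sum_mono Sb) auto
  also have "\<dots> = (\<Sum>j\<in>?J. (k choose j) * ((t choose (t - j)) * X j))"
  proof (rule sum.cong[OF refl])
    fix j
    have "card (?T1 j) = t choose (t - j)" using n_subsets[of "A \<inter> C0" "t - j"] fA cAC0 by simp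
    moreover have "card (?T2 j) = k choose j" using n_subsets[of "A - C0" j] fA cAmC0 by simp
    ultimately show "(\<Sum>T2\<in>?T2 j. \<Sum>T1\<in>?T1 j. X j) = (k choose j) * ((t choose (t - j)) * X j)"
      by simp
  qed
  also have "\<dots> = (\<Sum>j\<in>{..min k t}. (k choose j) * (t choose (t - j)) * ((k + j choose j) * (k+1)^(k-j)))"
    unfolding X_def by (simp add: mult.assoc)
  finally show ?thesis .
qed


definition fam_ok :: "nat \<Rightarrow> nat \<Rightarrow> 'a set set \<Rightarrow> bool" where
  "fam_ok t b F \<longleftrightarrow> t_intersecting t F \<and> (\<forall>A\<in>F. finite A \<and> card A \<le> b)"

lemma step_ok: "simp_step t F G \<Longrightarrow> fam_ok t b F \<Longrightarrow> fam_ok t b G"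
proof -
  assume st: "simp_step t F G" and ok: "fam_ok t b F"
  show ?thesis
  proof (cases "\<exists>A\<in>F. \<exists>B\<in>F. A \<noteq> B \<and> A \<subseteq> B \<and> G = F - {A}")
    case True
    then obtain A where "G = F - {A}" by blast
    then show ?thesis using ok unfolding fam_ok_def t_intersecting_def by auto
  next
    case False
    then obtain S X where SX: "S \<in> F" "X \<subset> S" "G = insert X (F - {S})" "t_intersecting t G"
      using st unfolding simp_step_def by blast
    have fS: "finite S" and cS: "card S \<le> b" using ok SX(1) unfolding fam_ok_def by auto
    have "finite X" using SX(2) fS by (meson finite_subset psubset_imp_subset)
    moreover have "card X \<le> b" using psubset_card_mono[OF fS SX(2)] cS by simp
    ultimately have "finite X" "card X \<le> b" by auto
    then show ?thesis using ok SX unfolding fam_ok_def by auto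
  qed
qed

lemma star_ok: "(simp_step t)\<^sup>*\<^sup>* F G \<Longrightarrow> fam_ok t b F \<Longrightarrow> fam_ok t b G"
  by (induction rule: rtranclp_induct) (auto intro: step_ok)

lemma peel_ok:
  assumes P: "peeling t q S T W" and S: "fam_ok t q S" and tq: "t \<le> q"
  shows "i \<le> q - t \<Longrightarrow> fam_ok t (t + (q - t - i)) (T (q - t - i))"
proof (induction i)
  case 0
  have "simplification t S (T (q - t))" using P unfolding peeling_def by auto
  then show ?case using star_ok[of t S "T (q - t)" q] S tq unfolding simplification_def by auto
next
  case (Suc i)
  define k where "k = q - t - i"
  have k1: "1 \<le> k" "k \<le> q - t" using Suc.prems unfolding k_def by auto
  have IH: "fam_ok t (t + k) (T k)" using Suc unfolding k_def by auto
  have Wk: "W k = {A \<in> T k. card A = t + k}" and simpl: "simplification t (T k - W k) (T (k - 1))"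
    using P k1 unfolding peeling_def by auto
  have "fam_ok t (t + (k - 1)) (T k - W k)"
    unfolding fam_ok_def
  proof
    show "t_intersecting t (T k - W k)" using IH unfolding fam_ok_def t_intersecting_def by blast
    show "\<forall>A\<in>T k - W k. finite A \<and> card A \<le> t + (k - 1)"
    proof
      fix A assume A: "A \<in> T k - W k"
      hence "finite A" "card A \<le> t + k" "card A \<noteq> t + k" using IH Wk unfolding fam_ok_def by auto
      thus "finite A \<and> card A \<le> t + (k - 1)" using k1 by simp
    qed
  qed
  hence "fam_ok t (t + (k - 1)) (T (k - 1))" using simpl star_ok unfolding simplification_def by blast
  moreover have "k - 1 = q - t - Suc i" unfolding k_def by simp
  ultimately show ?case by simp
qed

lemma peel_terminal:
  assumes P: "peeling t q S T W" and k: "1 \<le> k" "k \<le> q - t"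
  shows "\<nexists>G. simp_step t (T k) G"
proof (cases "k = q - t")
  case True
  then show ?thesis using P unfolding peeling_def simplification_def by auto
next
  case False
  hence "1 \<le> k + 1" "k + 1 \<le> q - t" using k by auto
  hence "simplification t (T (k+1) - W (k+1)) (T (k + 1 - 1))" using P unfolding peeling_def by blast
  then show ?thesis unfolding simplification_def by simp
qed

lemma finite_perm_graph: "finite (perm_graph n \<sigma>)"
proof -
  have "perm_graph n \<sigma> = (\<lambda>i. (i, \<sigma> i)) ` {1..n}" unfolding perm_graph_def by auto
  thus ?thesis by simp
qed

lemma finite_partial_perm: "partial_perm n A \<Longrightarrow> finite A"
  unfolding partial_perm_def using finite_perm_graph finite_subset by blast

theorem corollary4p4:
  shows "\<exists>k0::nat. \<exists>N::nat. \<forall>n t. N \<le> n \<and> real n powr 0.99 < real t \<and> t < n \<longrightarrow>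
    (\<forall>q S T W. t \<le> q \<and> q \<le> n \<and>
       (\<forall>A\<in>S. partial_perm n A \<and> card A \<le> q) \<and> t_intersecting t S \<and>
       peeling t q S T W \<longrightarrow>
       (\<forall>k. k0 < k \<and> k \<le> q - t \<longrightarrow>
          real (card (W k)) \<le> (200 * max (real k) (real t / real k)) ^ k))"
proof (intro exI allI impI)
  fix n t q k :: nat and S :: "(nat \<times> nat) set set" and T W :: "nat \<Rightarrow> (nat \<times> nat) set set"
  assume H: "0 \<le> n \<and> real n powr 0.99 < real t \<and> t < n"
    and H2: "t \<le> q \<and> q \<le> n \<and> (\<forall>A\<in>S. partial_perm n A \<and> card A \<le> q) \<and> t_intersecting t S \<and>
       peeling t q S T W"
    and Hk: "0 < k \<and> k \<le> q - t"
  have P: "peeling t q S T W" and tq: "t \<le> q" using H2 by auto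
  have k1: "1 \<le> k" and kq: "k \<le> q - t" using Hk by auto
  have Sok: "fam_ok t q S" using H2 finite_partial_perm unfolding fam_ok_def by blast
  have "fam_ok t (t + (q - t - (q - t - k))) (T (q - t - (q - t - k)))"
    by (rule peel_ok[OF P Sok tq]) simp
  moreover have "q - t - (q - t - k) = k" using kq by simp
  ultimately have ok: "fam_ok t (t + k) (T k)" by simp
  have tI: "t_intersecting t (T k)" and fin: "\<forall>C\<in>T k. finite C \<and> card C \<le> t + k"
    using ok unfolding fam_ok_def by auto
  have trm: "\<nexists>G. simp_step t (T k) G" by (rule peel_terminal[OF P k1 kq])
  have crit: "\<forall>B\<in>T k. \<forall>D. D \<subset> B \<longrightarrow> (\<exists>C\<in>T k. card (C \<inter> D) < t)"
    using crit_of_terminal[OF tI trm] by blast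
  have Wdef: "W k = {B\<in>T k. card B = t + k}" using P k1 kq unfolding peeling_def by auto
  have "card (W k) \<le> (\<Sum>j\<in>{..min k t}. (k choose j) * (t choose (t - j)) * ((k + j choose j) * (k+1)^(k-j)))"
    by (rule family_bound[OF tI fin crit Wdef k1])
  hence "real (card (W k)) \<le> real (\<Sum>j\<in>{..min k t}. (k choose j) * (t choose (t - j)) * ((k + j choose j) * (k+1)^(k-j)))"
    by (simp only: of_nat_le_iff)
  also have "\<dots> \<le> (200 * max (real k) (real t / real k))^k" by (rule final_ineq[OF k1])
  finally show "real (card (W k)) \<le> (200 * max (real k) (real t / real k)) ^ k" .
qed

end
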